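(* Let $\beta,\gamma>0$, $\tilde S$, $\tilde R$ and $N>0$ be real numbers satisfying $\tilde R\ge 0$ and $N>\tilde S e^{(\beta/\gamma)\tilde R}+\tilde R$. Then the transcendental equation \[ x=N-\tilde S e^{(\beta/\gamma)\tilde R}e^{-(\beta/\gamma)x} \] has a unique solution $x=\alpha$ such that $\tilde R<\alpha<N$.
   Context: In the paper $N=\tilde S+\tilde E+\tilde I+\tilde R$ with $\tilde S,\tilde E,\tilde I,\tilde R$ the initial values of an SEIR model, and the standing assumptions $\tilde I>0$, $\tilde E>(\gamma/\delta)\tilde I$, $\tilde S>\delta\tilde E/(\beta\tilde I)$ (for a constant $\delta>0$) are in force; in particular $\tilde S>0$. *)

theory Defs
  imports Complex_Main
begin

end

theory Submission
  imports Defs "HOL-Analysis.Analysis"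
begin

theorem lemma6:
  fixes \<beta> \<gamma> S R N :: real
  assumes "\<beta> > 0" and "\<gamma> > 0" and "S > 0" and "N > 0"
    and "R \<ge> 0"
    and "N > S * exp ((\<beta> / \<gamma>) * R) + R"
  shows "\<exists>!\<alpha>. R < \<alpha> \<and> \<alpha> < N \<and>
           \<alpha> = N - S * exp ((\<beta> / \<gamma>) * R) * exp (- (\<beta> / \<gamma>) * \<alpha>)"
proof -
  define k where "k = \<beta> / \<gamma>"
  define C where "C = S * exp (k * R)"
  have k: "k > 0" using assms unfolding k_def by simp
  have CS: "C * exp (- k * R) = S" unfolding C_def by (simp add: exp_minus field_simps)
  have CgeS: "C \<ge> S" unfolding C_def using k assms by simp
  have NC: "N > C + R" using assms unfolding C_def k_def by simp
  define f where "f x = x - N + C * exp (- k * x)" for x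
  have fR: "f R < 0" unfolding f_def using CS CgeS NC by simp
  have fN: "f N > 0" unfolding f_def using assms unfolding C_def by simp
  have cont: "continuous_on {R..N} f" unfolding f_def by (intro continuous_intros)
  obtain a where a: "R \<le> a" "a \<le> N" "f a = 0"
    using IVT'[of f R 0 N, OF _ _ _ cont] fR fN NC CgeS assms by force
  have ex: "R < a \<and> a < N \<and> a = N - C * exp (- k * a)"
    using a fR fN unfolding f_def by (cases "a = R"; cases "a = N") auto
  have uniq: False if ab: "R < a" "a < b" "a = N - C * exp (- k * a)" "b = N - C * exp (- k * b)" for a b
  proof -
    define t where "t = (a - R) / (b - R)"
    have t: "0 \<le> t" "t \<le> 1" using ab unfolding t_def by auto
    have bR: "b - R \<noteq> 0" using ab by simp
    have "t * (b - R) = a - R" unfolding t_def using bR by simp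
    hence at: "a = (1 - t) * R + t * b" by (simp add: algebra_simps)
    have "exp ((1 - t) *\<^sub>R (- k * R) + t *\<^sub>R (- k * b)) \<le> (1 - t) * exp (- k * R) + t * exp (- k * b)"
      by (rule convex_onD[OF exp_convex]) (use t in auto)
    moreover have "(1 - t) *\<^sub>R (- k * R) + t *\<^sub>R (- k * b) = - k * a" by (subst at) (simp add: algebra_simps)
    ultimately have e: "exp (- k * a) \<le> (1 - t) * exp (- k * R) + t * exp (- k * b)" by simp
    have "C > 0" using CgeS assms by simp
    have "C * exp (- k * a) \<le> (1 - t) * S + t * (C * exp (- k * b))"
    proof -
      have "C * ((1 - t) * exp (- k * R) + t * exp (- k * b)) = (1 - t) * (C * exp (- k * R)) + t * (C * exp (- k * b))"
        by (simp add: algebra_simps)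
      thus ?thesis using mult_left_mono[OF e, of C] \<open>C > 0\<close> CS by simp
    qed
    moreover have "N - a = C * exp (- k * a)" "N - b = C * exp (- k * b)" using ab(3,4) by linarith+
    ultimately have "N - a \<le> (1 - t) * S + t * (N - b)" by simp
    hence "(1 - t) * N \<le> (1 - t) * (S + R)" using at by (simp add: algebra_simps)
    moreover have "t < 1" using ab unfolding t_def by simp
    ultimately have "N \<le> S + R" by simp
    thus False using NC CgeS by simp
  qed
  show ?thesis
    unfolding C_def[symmetric] k_def[symmetric]
  proof (rule ex1I[of _ a])
    show "R < a \<and> a < N \<and> a = N - C * exp (- k * a)" using ex .
  next
    fix b assume b: "R < b \<and> b < N \<and> b = N - C * exp (- k * b)"
    show "b = a"
    proof (rule ccontr)
      assume "b \<noteq> a"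
      then consider "b < a" | "a < b" by linarith
      thus False using uniq ex b by metis
    qed
  qed
qed

end
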